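(* Let $V$ be a ground model, $\kappa$ an infinite cardinal, and $\mathbb{A}\in V$ an infinite Boolean algebra. Then for every $\varepsilon>0$ there are $\mathbb{M}_\kappa$-names $\dot{\mathcal{U}}$ and $\dot{\mathcal{V}}$ for ultrafilters on $\mathbb{A}$ such that $\Vdash_{\mathbb{M}_\kappa}\dot{\mathcal{U}}\neq\dot{\mathcal{V}}$, and for every $p\in\mathbb{M}_\kappa$ for which there is $A\in\mathbb{A}$ with $p\Vdash A\in\dot{\mathcal{U}}\setminus\dot{\mathcal{V}}$ we have $\lambda_\kappa(p)\le 1/4+\varepsilon$.
   Context: $\mathbb{M}_\kappa=Bor(2^\kappa)/\mathcal{N}_\kappa$ is the measure algebra of the standard product measure $\lambda_\kappa$ on $2^\kappa$ ($\lambda_\kappa$ also denotes the induced measure on $\mathbb{M}_\kappa$), used as a forcing notion (conditions are nonzero elements). An $\mathbb{M}_\kappa$-name for an ultrafilter on $\mathbb{A}$ is a name $\dot{\mathcal{U}}$ with $\Vdash_{\mathbb{M}_\kappa}$ "$\dot{\mathcal{U}}$ is an ultrafilter on $\mathbb{A}$". *)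

theory Defs
  imports "HOL-Probability.Probability"
begin

text \<open>The standard product (coin-flipping) measure lambda_kappa on 2^kappa, where kappa is
  represented by an infinite index type 'k.  Elements of the measure algebra M_kappa are
  represented by measurable sets, compared modulo null sets.\<close>

definition cantor_measure :: "('k \<Rightarrow> bool) measure" where
  "cantor_measure = (\<Pi>\<^sub>M i\<in>UNIV. measure_pmf (bernoulli_pmf (1/2)))"

definition ma_eq :: "'b measure \<Rightarrow> 'b set \<Rightarrow> 'b set \<Rightarrow> bool" where
  "ma_eq M A B \<longleftrightarrow> A \<in> sets M \<and> B \<in> sets M \<and> measure M ((A - B) \<union> (B - A)) = 0"

text \<open>A name for a subset U of the ground-model Boolean algebra 'a is (up to equivalence)
  given by the Boolean values  f a = [[a \<in> U]].  "It is forced that U is an ultrafilter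
  on A" holds iff f is a Boolean homomorphism from 'a into the measure algebra.\<close>
definition ultrafilter_name :: "'b measure \<Rightarrow> ('a::boolean_algebra \<Rightarrow> 'b set) \<Rightarrow> bool" where
  "ultrafilter_name M f \<longleftrightarrow>
     (\<forall>a. f a \<in> sets M) \<and>
     (\<forall>a b. ma_eq M (f (inf a b)) (f a \<inter> f b)) \<and>
     (\<forall>a. ma_eq M (f (- a)) (space M - f a)) \<and>
     ma_eq M (f top) (space M)"

text \<open>Forced "U \<noteq> V": the supremum over a of [[a \<in> U]] symdiff [[a \<in> V]] is 1 in
  the measure algebra, i.e. every set almost disjoint from all of these values is null.\<close>
definition forces_neq :: "'b measure \<Rightarrow> ('a \<Rightarrow> 'b set) \<Rightarrow> ('a \<Rightarrow> 'b set) \<Rightarrow> bool" where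
  "forces_neq M f g \<longleftrightarrow>
     (\<forall>B\<in>sets M. (\<forall>a. measure M (B \<inter> ((f a - g a) \<union> (g a - f a))) = 0) \<longrightarrow> measure M B = 0)"

text \<open>p forces "a \<in> U \<setminus> V": p \<le> [[a\<in>U]] \<and> \<not>[[a\<in>V]] in the measure algebra.\<close>
definition forces_in_diff :: "'b measure \<Rightarrow> 'b set \<Rightarrow> ('a \<Rightarrow> 'b set) \<Rightarrow> ('a \<Rightarrow> 'b set) \<Rightarrow> 'a \<Rightarrow> bool" where
  "forces_in_diff M p f g a \<longleftrightarrow> measure M (p - (f a - g a)) = 0"

end

theory Submission
  imports Defs
begin


lemma prob_cm: "prob_space (cantor_measure :: ('k \<Rightarrow> bool) measure)"
  unfolding cantor_measure_def by (rule prob_space_PiM) (simp add: prob_space_measure_pmf)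

lemma space_cm[simp]: "space (cantor_measure :: ('k \<Rightarrow> bool) measure) = UNIV"
  unfolding cantor_measure_def by (simp add: space_PiM)

lemma cyl_eq:
  "{x :: 'k \<Rightarrow> bool. \<forall>i\<in>J. x i = z i} =
   prod_emb UNIV (\<lambda>_. measure_pmf (bernoulli_pmf (1/2))) J (\<Pi>\<^sub>E i\<in>J. {z i})"
proof -
  have sp: "space (\<Pi>\<^sub>M i\<in>(UNIV::'k set). measure_pmf (bernoulli_pmf (1/2))) = UNIV"
    by (simp add: space_PiM)
  show ?thesis
    unfolding prod_emb_def sp
    by (auto simp: restrict_def PiE_def extensional_def Pi_def)
qed

lemma cyl_sets: "finite J \<Longrightarrow> {x :: 'k \<Rightarrow> bool. \<forall>i\<in>J. x i = z i} \<in> sets cantor_measure"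
  unfolding cyl_eq cantor_measure_def by (rule sets_PiM_I) auto

lemma cyl_meas: "finite J \<Longrightarrow> measure cantor_measure {x :: 'k \<Rightarrow> bool. \<forall>i\<in>J. x i = z i} = (1/2)^card J"
proof -
  assume J: "finite J"
  have "emeasure cantor_measure {x :: 'k \<Rightarrow> bool. \<forall>i\<in>J. x i = z i} = (\<Prod>i\<in>J. emeasure (measure_pmf (bernoulli_pmf (1/2))) {z i})"
    unfolding cyl_eq cantor_measure_def
    by (rule emeasure_PiM_emb) (auto simp: J prob_space_measure_pmf)
  also have "\<dots> = (\<Prod>i\<in>J. ennreal (1/2))"
  proof (intro prod.cong refl)
    fix i show "emeasure (measure_pmf (bernoulli_pmf (1/2))) {z i} = ennreal (1/2)"
      by (cases "z i") (simp_all add: emeasure_pmf_single)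
  qed
  also have "\<dots> = ennreal ((1/2)^card J)" by (simp only: prod_constant ennreal_power[symmetric])
  finally show ?thesis by (simp add: measure_def)
qed



definition bhom :: "('a::boolean_algebra \<Rightarrow> bool) \<Rightarrow> bool" where
  "bhom h \<longleftrightarrow> (\<forall>a b. h (inf a b) = (h a \<and> h b)) \<and> (\<forall>a. h (- a) = (\<not> h a)) \<and> h top"

definition isfilt :: "'a::boolean_algebra \<Rightarrow> 'a set \<Rightarrow> bool" where
  "isfilt a F \<longleftrightarrow> a \<in> F \<and> bot \<notin> F \<and> (\<forall>x\<in>F. \<forall>y\<in>F. inf x y \<in> F) \<and> (\<forall>x\<in>F. \<forall>y. x \<le> y \<longrightarrow> y \<in> F)"

lemma ultra_exists:
  fixes a :: "'a::boolean_algebra"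
  assumes "a \<noteq> bot"
  shows "\<exists>h. bhom h \<and> h a"
proof -
  let ?A = "{F. isfilt a F}"
  have "\<exists>M\<in>?A. \<forall>X\<in>?A. M \<subseteq> X \<longrightarrow> X = M"
  proof (rule Zorn_Lemma2, intro ballI)
    fix C assume C: "C \<in> chains ?A"
    show "\<exists>U\<in>?A. \<forall>X\<in>C. X \<subseteq> U"
    proof (cases "C = {}")
      case True
      have "isfilt a {y. a \<le> y}" using assms
        by (auto simp: isfilt_def bot_unique intro: order_trans)
      then show ?thesis using True by blast
    next
      case False
      have sub: "C \<subseteq> ?A" and ch: "\<forall>X\<in>C. \<forall>Y\<in>C. X \<subseteq> Y \<or> Y \<subseteq> X"
        using C by (auto simp: chains_def chain_subset_def)
      have "isfilt a (\<Union>C)"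
        unfolding isfilt_def
      proof (intro conjI ballI allI impI)
        show "a \<in> \<Union>C" using False sub by (auto simp: isfilt_def)
        show "bot \<notin> \<Union>C" using sub by (auto simp: isfilt_def)
      next
        fix x y assume "x \<in> \<Union>C" "y \<in> \<Union>C"
        then obtain X Y where X: "X \<in> C" "x \<in> X" and Y: "Y \<in> C" "y \<in> Y" by blast
        show "inf x y \<in> \<Union>C"
        proof (cases "X \<subseteq> Y")
          case True
          then show ?thesis using X Y sub unfolding isfilt_def by blast
        next
          case False
          then have "Y \<subseteq> X" using ch X Y by blast
          then show ?thesis using X Y sub unfolding isfilt_def by blast
        qed
      next
        fix x y assume "x \<in> \<Union>C" "x \<le> y"
        then show "y \<in> \<Union>C" using sub unfolding isfilt_def by blast
      qed
      then show ?thesis by blast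
    qed
  qed
  then obtain F where F: "isfilt a F" and maxF: "\<And>X. isfilt a X \<Longrightarrow> F \<subseteq> X \<Longrightarrow> X = F" by blast
  have compl: "- x \<in> F" if "x \<notin> F" for x
  proof -
    let ?G = "{y. \<exists>f\<in>F. inf f x \<le> y}"
    have "bot \<in> ?G"
    proof (rule ccontr)
      assume nb: "bot \<notin> ?G"
      have "isfilt a ?G"
        unfolding isfilt_def
      proof (intro conjI ballI allI impI)
        have "inf a x \<le> a" by simp
        then show "a \<in> ?G" using F unfolding isfilt_def by blast
        show "bot \<notin> ?G" by (rule nb)
      next
        fix u v assume "u \<in> ?G" "v \<in> ?G"
        then obtain f g where "f \<in> F" "inf f x \<le> u" "g \<in> F" "inf g x \<le> v" by blast
        moreover have "inf (inf f g) x \<le> inf u v"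
          using calculation by (meson inf_le1 inf_le2 le_inf_iff order_trans)
        ultimately show "inf u v \<in> ?G" using F unfolding isfilt_def by blast
      next
        fix u v assume "u \<in> ?G" "u \<le> v"
        then show "v \<in> ?G" by (auto intro: order_trans)
      qed
      moreover have "F \<subseteq> ?G" by (blast intro: inf_le1)
      ultimately have "?G = F" using maxF by blast
      moreover have "x \<in> ?G" using F unfolding isfilt_def by (blast intro: inf_le2)
      ultimately show False using that by blast
    qed
    then obtain f where "f \<in> F" "inf f x \<le> bot" by blast
    then have "f \<le> - x" by (simp add: bot_unique inf_shunt)
    then show ?thesis using \<open>f \<in> F\<close> F unfolding isfilt_def by blast
  qed
  have "bhom (\<lambda>x. x \<in> F)"
    unfolding bhom_def
  proof (intro conjI allI)
    fix u v
    show "(inf u v \<in> F) = (u \<in> F \<and> v \<in> F)"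
      using F unfolding isfilt_def by (meson inf_le1 inf_le2)
  next
    fix u
    have "\<not> (u \<in> F \<and> - u \<in> F)"
      using F unfolding isfilt_def by (metis inf_compl_bot)
    then show "(- u \<in> F) = (\<not> u \<in> F)" using compl by blast
  next
    show "top \<in> F" using F unfolding isfilt_def by (meson top_greatest)
  qed
  then show ?thesis using F unfolding isfilt_def by blast
qed

lemma partitions:
  assumes inf: "infinite (UNIV :: 'a::boolean_algebra set)"
  shows "\<exists>f :: nat \<Rightarrow> 'a. (\<forall>i<Suc n. f i \<noteq> bot) \<and>
           (\<forall>i<Suc n. \<forall>k<Suc n. i \<noteq> k \<longrightarrow> inf (f i) (f k) = bot) \<and>
           (\<forall>x. (\<forall>i<Suc n. inf x (f i) = bot) \<longrightarrow> x = bot)"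
proof (induction n)
  case 0
  have "top \<noteq> (bot::'a)"
  proof
    assume tb: "top = (bot::'a)"
    have "x = bot" for x :: 'a
    proof -
      have "x \<le> top" by simp
      then show "x = bot" using tb by (simp add: bot_unique)
    qed
    then have "UNIV = {bot::'a}" by auto
    then have "finite (UNIV::'a set)" by (metis finite.emptyI finite_insert)
    then show False using inf by simp
  qed
  then show ?case by (intro exI[of _ "\<lambda>_. top"]) auto
next
  case (Suc n)
  then obtain f :: "nat \<Rightarrow> 'a" where nz: "\<forall>i<Suc n. f i \<noteq> bot"
    and dj: "\<forall>i<Suc n. \<forall>k<Suc n. i \<noteq> k \<longrightarrow> inf (f i) (f k) = bot"
    and cov: "\<forall>x. (\<forall>i<Suc n. inf x (f i) = bot) \<longrightarrow> x = bot" by blast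
  have "\<exists>i<Suc n. infinite {x. x \<le> f i}"
  proof (rule ccontr)
    assume "\<not> ?thesis"
    then have fin: "\<forall>i<Suc n. finite {x. x \<le> f i}" by blast
    let ?g = "\<lambda>x. restrict (\<lambda>i. inf x (f i)) {..<Suc n}"
    have "inj ?g"
    proof (rule injI)
      fix x y assume eq: "?g x = ?g y"
      have e: "inf x (f i) = inf y (f i)" if "i < Suc n" for i
        using fun_cong[OF eq, of i] that by simp
      have k: "inf (inf u (- v)) (f i) = bot" if "i < Suc n" "inf u (f i) = inf v (f i)" for u v i
      proof -
        have "inf (inf u (- v)) (f i) = inf (inf u (f i)) (- v)" by (simp add: inf_aci)
        also have "\<dots> = inf (inf v (f i)) (- v)" using that by simp
        also have "\<dots> = bot" by (simp add: inf_aci)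
        finally show ?thesis .
      qed
      have "inf x (- y) = bot" using cov k e by blast
      moreover have "inf y (- x) = bot" using cov k e by (metis (no_types, lifting))
      ultimately have "x \<le> y" "y \<le> x" by (simp_all add: inf_shunt)
      then show "x = y" by (rule antisym)
    qed
    moreover have "range ?g \<subseteq> (\<Pi>\<^sub>E i\<in>{..<Suc n}. {x. x \<le> f i})" by (intro image_subsetI) (simp add: restrict_PiE_iff)
    moreover have "finite (\<Pi>\<^sub>E i\<in>{..<Suc n}. {x. x \<le> f i})"
      by (rule finite_PiE) (use fin in auto)
    ultimately have "finite (UNIV :: 'a set)"
      by (metis finite_imageD finite_subset)
    then show False using inf by simp
  qed
  then obtain i where i: "i < Suc n" "infinite {x. x \<le> f i}" by blast
  have "{x. x \<le> f i} \<noteq> {bot, f i}" using i(2) by (metis finite.emptyI finite_insert)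
  then obtain d where d: "d \<le> f i" "d \<noteq> bot" "d \<noteq> f i" by (auto simp: bot_unique)
  define f' where "f' = (f(i := d))(Suc n := inf (f i) (- d))"
  have r1: "inf (f i) (- d) \<noteq> bot"
  proof
    assume "inf (f i) (- d) = bot"
    then have "f i \<le> d" by (simp add: inf_shunt)
    then show False using d by (simp add: antisym)
  qed
  show ?case
  proof (intro exI[of _ f'] conjI allI impI)
    fix k assume "k < Suc (Suc n)"
    then show "f' k \<noteq> bot" using nz r1 d by (auto simp: f'_def less_Suc_eq)
  next
    fix k l assume kl: "k < Suc (Suc n)" "l < Suc (Suc n)" "k \<noteq> l"
    have le: "f' k \<le> f k" if "k < Suc n" for k
      using d that by (auto simp: f'_def)
    have le2: "f' (Suc n) \<le> f i" by (simp add: f'_def)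
    have ds: "inf d (inf (f i) (- d)) = bot"
      by (metis inf_compl_bot inf_left_commute inf_commute inf_bot_right)
    have gen: "inf (f' k) (f' l) = bot" if "k < Suc (Suc n)" "l < Suc (Suc n)" "k \<noteq> l" "k \<noteq> Suc n" for k l
    proof (cases "l = Suc n")
      case True
      show ?thesis
      proof (cases "k = i")
        case True
        then show ?thesis using \<open>l = Suc n\<close> ds i by (simp add: f'_def)
      next
        case False
        have "inf (f' k) (f' l) \<le> inf (f k) (f i)"
          using le[of k] le2 True that by (meson inf_mono less_SucE)
        then show ?thesis using dj False that i by (metis bot_unique less_SucE True)
      qed
    next
      case False
      have "inf (f' k) (f' l) \<le> inf (f k) (f l)"
        using le[of k] le[of l] False that by (meson inf_mono less_SucE)
      then show ?thesis using dj False that by (metis bot_unique less_SucE)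
    qed
    show "inf (f' k) (f' l) = bot"
    proof (cases "k = Suc n")
      case False then show ?thesis using gen kl by blast
    next
      case True
      then have "l \<noteq> Suc n" using kl by simp
      then show ?thesis using gen[of l k] kl by (simp add: inf_commute)
    qed
  next
    fix x assume h: "\<forall>k<Suc (Suc n). inf x (f' k) = bot"
    have "inf x (f k) = bot" if "k < Suc n" for k
    proof (cases "k = i")
      case False
      then show ?thesis using h[rule_format, of k] that by (simp add: f'_def)
    next
      case True
      have a: "inf x d = bot" using h[rule_format, of i] i by (simp add: f'_def)
      have b: "inf x (inf (f i) (- d)) = bot" using h[rule_format, of "Suc n"] by (simp add: f'_def)
      have "inf x (f i) = sup (inf (inf x (f i)) d) (inf (inf x (f i)) (- d))"
        by (simp add: inf_sup_distrib1[symmetric])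
      also have "\<dots> = bot" using a b
        by (metis inf_assoc inf_commute inf_bot_left sup_bot_left)
      finally show ?thesis using True by simp
    qed
    then show "x = bot" using cov by blast
  qed
qed

lemma infinite_homs:
  assumes inf: "infinite (UNIV :: 'a::boolean_algebra set)"
  shows "infinite {h :: 'a \<Rightarrow> bool. bhom h}"
proof
  assume fin: "finite {h :: 'a \<Rightarrow> bool. bhom h}"
  let ?n = "card {h :: 'a \<Rightarrow> bool. bhom h}"
  obtain f :: "nat \<Rightarrow> 'a" where nz: "\<forall>i<Suc ?n. f i \<noteq> bot"
    and dj: "\<forall>i<Suc ?n. \<forall>k<Suc ?n. i \<noteq> k \<longrightarrow> inf (f i) (f k) = bot"
    using partitions[OF inf, of ?n] by blast
  have "\<forall>i. \<exists>h. i < Suc ?n \<longrightarrow> bhom h \<and> h (f i)" using nz ultra_exists by blast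
  then obtain H where H: "\<And>i. i < Suc ?n \<Longrightarrow> bhom (H i) \<and> H i (f i)" by metis
  have "inj_on H {..<Suc ?n}"
  proof (rule inj_onI)
    fix i k assume ik: "i \<in> {..<Suc ?n}" "k \<in> {..<Suc ?n}" "H i = H k"
    show "i = k"
    proof (rule ccontr)
      assume "i \<noteq> k"
      then have "inf (f i) (f k) = bot" using dj ik by auto
      moreover have "H i (inf (f i) (f k))" using H[of i] H[of k] ik unfolding bhom_def by auto
      moreover have "H i (- top) = (\<not> H i top)" "H i top" using H[of i] ik unfolding bhom_def by auto
      then have "\<not> H i bot" by simp
      ultimately show False by simp
    qed
  qed
  moreover have "H ` {..<Suc ?n} \<subseteq> {h. bhom h}" using H by auto
  ultimately have "card {..<Suc ?n} \<le> ?n"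
    using card_inj_on_le fin by blast
  then show False by simp
qed




lemma block_meas:
  fixes c :: "nat \<Rightarrow> 'k" and j :: nat and P :: "(nat \<Rightarrow> bool) \<Rightarrow> (nat \<Rightarrow> bool) \<Rightarrow> bool"
  assumes injc: "inj c"
  defines "Bj \<equiv> (\<Pi>\<^sub>E i\<in>{..<j}. (UNIV::bool set))"
  defines "S \<equiv> {x::'k\<Rightarrow>bool. P (restrict (\<lambda>i. x (c i)) {..<j}) (restrict (\<lambda>i. x (c (j+i))) {..<j})}"
  shows "S \<in> sets cantor_measure \<and>
         measure cantor_measure S = card {p \<in> Bj \<times> Bj. P (fst p) (snd p)} * (1/2)^(2*j)"
proof -
  let ?s = "\<lambda>x::'k\<Rightarrow>bool. restrict (\<lambda>i. x (c i)) {..<j}"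
  let ?t = "\<lambda>x::'k\<Rightarrow>bool. restrict (\<lambda>i. x (c (j+i))) {..<j}"
  define J where "J = c ` {..<2*j}"
  define z where "z = (\<lambda>(v::nat\<Rightarrow>bool) (w::nat\<Rightarrow>bool) k. if k \<in> c ` {..<j} then v (inv c k) else w (inv c k - j))"
  define Q where "Q = {p \<in> Bj \<times> Bj. P (fst p) (snd p)}"
  define E where "E = (\<lambda>p. {x::'k\<Rightarrow>bool. \<forall>k\<in>J. x k = z (fst p) (snd p) k})"
  have finJ: "finite J" and cardJ: "card J = 2*j"
    unfolding J_def using injc by (auto simp: card_image inj_on_subset)
  have icv: "inv c (c i) = i" for i using injc by simp
  have notin: "c i \<notin> c ` {..<j}" if "j \<le> i" for i using injc that by (auto dest: injD)
  have Eeq: "{x. ?s x = v \<and> ?t x = w} = E (v, w)" if v: "v \<in> Bj" and w: "w \<in> Bj" for v w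
  proof (intro set_eqI iffI)
    fix x assume x: "x \<in> {x. ?s x = v \<and> ?t x = w}"
    show "x \<in> E (v, w)" unfolding E_def
    proof (intro CollectI ballI)
      fix k assume "k \<in> J"
      then obtain i where i: "i < 2*j" "k = c i" unfolding J_def by auto
      show "x k = z (fst (v, w)) (snd (v, w)) k"
      proof (cases "i < j")
        case True
        then show ?thesis using x i icv by (auto simp: z_def)
      next
        case False
        have ij: "j + (i - j) = i" "i - j < j" using False i by auto
        have "w (i - j) = x (c i)" using x ij by auto
        then show ?thesis using False i icv notin[of i] by (auto simp: z_def)
      qed
    qed
  next
    fix x assume x: "x \<in> E (v, w)"
    have xs: "x (c i) = v i" if "i < j" for i
    proof -
      have "c i \<in> J" using that unfolding J_def by auto
      then show ?thesis using x that icv by (auto simp: E_def z_def)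
    qed
    have xt: "x (c (j+i)) = w i" if "i < j" for i
    proof -
      have "c (j+i) \<in> J" using that unfolding J_def by auto
      then show ?thesis using x that icv notin[of "j+i"] by (auto simp: E_def z_def)
    qed
    have "?s x = v"
    proof
      fix i show "?s x i = v i" using xs v by (cases "i < j") (auto simp: Bj_def PiE_def extensional_def)
    qed
    moreover have "?t x = w"
    proof
      fix i show "?t x i = w i" using xt w by (cases "i < j") (auto simp: Bj_def PiE_def extensional_def)
    qed
    ultimately show "x \<in> {x. ?s x = v \<and> ?t x = w}" by simp
  qed
  have sB: "?s x \<in> Bj" "?t x \<in> Bj" for x by (auto simp: Bj_def)
  have Seq: "S = (\<Union>p\<in>Q. E p)"
  proof (intro set_eqI iffI)
    fix x assume "x \<in> S"
    then have "(?s x, ?t x) \<in> Q" using sB unfolding Q_def S_def by auto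
    moreover have "x \<in> E (?s x, ?t x)" using Eeq[OF sB(1) sB(2), of x x] by blast
    ultimately show "x \<in> (\<Union>p\<in>Q. E p)" by blast
  next
    fix x assume "x \<in> (\<Union>p\<in>Q. E p)"
    then obtain v w where vw: "(v, w) \<in> Q" "x \<in> E (v, w)" by auto
    then have "?s x = v \<and> ?t x = w" using Eeq[of v w] unfolding Q_def by auto
    then show "x \<in> S" using vw unfolding Q_def S_def by auto
  qed
  have finB: "finite Bj" unfolding Bj_def by (intro finite_PiE) auto
  have finQ: "finite Q" unfolding Q_def by (rule finite_subset[of _ "Bj \<times> Bj"]) (auto simp: finB)
  have Esets: "E ` Q \<subseteq> sets cantor_measure" unfolding E_def using cyl_sets[OF finJ] by auto
  have disj: "disjoint_family_on E Q"
    unfolding disjoint_family_on_def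
  proof (intro ballI impI)
    fix p q assume pq: "p \<in> Q" "q \<in> Q" "p \<noteq> q"
    obtain v w v' w' where p: "p = (v, w)" and q: "q = (v', w')" by fastforce
    show "E p \<inter> E q = {}"
      using Eeq[of v w] Eeq[of v' w'] pq unfolding p q Q_def by auto
  qed
  interpret P: prob_space "cantor_measure :: ('k\<Rightarrow>bool) measure" by (rule prob_cm)
  have "measure cantor_measure S = (\<Sum>p\<in>Q. measure cantor_measure (E p))"
    unfolding Seq by (rule P.finite_measure_finite_Union[OF finQ Esets disj])
  also have "\<dots> = (\<Sum>p\<in>Q. (1/2)^(2*j))"
    by (intro sum.cong refl) (simp add: E_def cyl_meas[OF finJ] cardJ)
  finally show ?thesis
    using Seq finQ Esets by (auto simp: Q_def)
qed




lemma pow_half: "(1/2::real)^(2*j) = 1/((2::real)^j)^2"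
proof -
  have "(2::real)^(2*j) = (2^j)^2" by (metis power_mult mult.commute)
  then show ?thesis by (simp add: power_one_over)
qed

lemma card_prod_diff:
  assumes "finite Bs"
  shows "real (card ((Bs \<inter> S) \<times> (Bs - S))) = real (card (Bs \<inter> S)) * (real (card Bs) - real (card (Bs \<inter> S)))"
proof -
  have cs: "card (Bs - S) = card Bs - card (Bs \<inter> S)" by (rule card_Diff_subset_Int) (use assms in auto)
  have sle: "card (Bs \<inter> S) \<le> card Bs" by (rule card_mono[OF assms]) auto
  show ?thesis unfolding card_cartesian_product cs of_nat_mult of_nat_diff[OF sle] ..
qed

lemma quarter:
  fixes m t :: real assumes "m > 0"
  shows "t * (m - t) * (1 / m^2) \<le> 1/4"
proof -
  have "0 \<le> (m - 2*t)^2" by simp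
  moreover have "m^2/4 - t*(m-t) = (m - 2*t)^2/4" by (simp add: power2_eq_square field_simps)
  ultimately have "t * (m - t) \<le> m^2 / 4" by linarith
  then show ?thesis using assms by (simp add: field_simps)
qed

lemma diagm: fixes m :: real assumes "m > 0" shows "m * (1 / m^2) = 1/m"
  using assms by (simp add: power2_eq_square)



lemma ma_eq_refl: "X \<in> sets M \<Longrightarrow> ma_eq M X X" by (simp add: ma_eq_def)

lemma ultra_of:
  fixes G :: "('k \<Rightarrow> bool) \<Rightarrow> 'a::boolean_algebra \<Rightarrow> bool"
  assumes hom: "\<And>x. bhom (G x)" and ms: "\<And>a. {x. G x a} \<in> sets cantor_measure"
  shows "ultrafilter_name cantor_measure (\<lambda>a. {x. G x a})"
  unfolding ultrafilter_name_def
proof (intro conjI allI)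
  fix a b
  have e: "{x. G x (inf a b)} = {x. G x a} \<inter> {x. G x b}" using hom unfolding bhom_def by auto
  show "ma_eq cantor_measure {x. G x (inf a b)} ({x. G x a} \<inter> {x. G x b})"
    using ma_eq_refl[OF ms[of "inf a b"]] unfolding e[symmetric] .
next
  fix a
  have e: "{x. G x (- a)} = space cantor_measure - {x. G x a}" using hom unfolding bhom_def by auto
  show "ma_eq cantor_measure {x. G x (- a)} (space cantor_measure - {x. G x a})"
    using ma_eq_refl[OF ms[of "- a"]] unfolding e[symmetric] .
next
  have gt: "G x top" for x using hom[of x] unfolding bhom_def by blast
  have e: "{x. G x top} = space cantor_measure" using gt by auto
  show "ma_eq cantor_measure {x. G x top} (space cantor_measure)"
    using ma_eq_refl[OF ms[of top]] unfolding e[symmetric] .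
qed (use ms in auto)




theorem corollary7p11:
  fixes \<epsilon> :: real
  assumes "infinite (UNIV :: 'k set)"
    and "infinite (UNIV :: 'a::boolean_algebra set)"
    and "\<epsilon> > 0"
  shows "\<exists>U V :: 'a \<Rightarrow> ('k \<Rightarrow> bool) set.
           ultrafilter_name cantor_measure U \<and> ultrafilter_name cantor_measure V \<and>
           forces_neq cantor_measure U V \<and>
           (\<forall>p\<in>sets cantor_measure. measure cantor_measure p > 0 \<longrightarrow>
              (\<exists>A. forces_in_diff cantor_measure p U V A) \<longrightarrow>
              measure cantor_measure p \<le> 1/4 + \<epsilon>)"
proof -
  interpret P: prob_space "cantor_measure :: ('k\<Rightarrow>bool) measure" by (rule prob_cm)
  obtain c :: "nat \<Rightarrow> 'k" where injc: "inj c" using infinite_countable_subset[OF assms(1)] by blast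
  obtain n :: nat where n: "1/\<epsilon> < 2^n" using real_arch_pow[of 2 "1/\<epsilon>"] by auto
  define j where "j = Suc n"
  have j0: "0 < j" by (simp add: j_def)
  have "(2::real)^n \<le> 2^j" unfolding j_def by simp
  then have "1/\<epsilon> < 2^j" using n by linarith
  then have jeps: "(1/2::real)^j \<le> \<epsilon>" using assms(3)
    by (simp add: power_one_over field_simps)
  define Bj where "Bj = (\<Pi>\<^sub>E i\<in>{..<j}. (UNIV::bool set))"
  have finB: "finite Bj" unfolding Bj_def by (intro finite_PiE) auto
  have cardB: "card Bj = 2^j" unfolding Bj_def by (simp add: card_PiE)
  obtain HB where HB: "finite HB" "card HB = card Bj" "HB \<subseteq> {h :: 'a \<Rightarrow> bool. bhom h}"
    using infinite_arbitrarily_large[OF infinite_homs[OF assms(2)]] by blast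
  obtain H where bijH: "bij_betw H Bj HB" using finite_same_card_bij[OF finB HB(1) HB(2)[symmetric]] by blast
  have homH: "bhom (H v)" if "v \<in> Bj" for v using bijH HB(3) that by (auto simp: bij_betw_def)
  have injH: "inj_on H Bj" using bijH by (simp add: bij_betw_def)
  define \<sigma> where "\<sigma> = (\<lambda>x::'k\<Rightarrow>bool. restrict (\<lambda>i. x (c i)) {..<j})"
  define \<tau> where "\<tau> = (\<lambda>x::'k\<Rightarrow>bool. restrict (\<lambda>i. x (c (j+i))) {..<j})"
  define flip where "flip = (\<lambda>v::nat\<Rightarrow>bool. v(0 := \<not> v 0))"
  define \<tau>' where "\<tau>' = (\<lambda>x. if \<tau> x = \<sigma> x then flip (\<sigma> x) else \<tau> x)"
  have sB: "\<sigma> x \<in> Bj" "\<tau> x \<in> Bj" for x by (auto simp: Bj_def \<sigma>_def \<tau>_def)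
  have flipB: "flip v \<in> Bj" if "v \<in> Bj" for v
    using that j0 by (auto simp: Bj_def flip_def PiE_def extensional_def)
  have flipne: "flip v \<noteq> v" for v by (auto simp: flip_def dest: fun_cong[of _ _ 0])
  have tB: "\<tau>' x \<in> Bj" for x using sB flipB by (auto simp: \<tau>'_def)
  have tne: "\<tau>' x \<noteq> \<sigma> x" for x using flipne by (auto simp: \<tau>'_def)
  have meas: "{x. P (\<sigma> x) (\<tau> x)} \<in> sets cantor_measure \<and>
      measure cantor_measure {x. P (\<sigma> x) (\<tau> x)} = card {p \<in> Bj \<times> Bj. P (fst p) (snd p)} * (1/2)^(2*j)"
    for P using block_meas[OF injc, where j=j and P=P] unfolding \<sigma>_def \<tau>_def Bj_def by simp
  define U where "U = (\<lambda>a. {x. H (\<sigma> x) a})"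
  define V where "V = (\<lambda>a. {x. H (\<tau>' x) a})"
  have Us: "U a \<in> sets cantor_measure" for a
    using meas[of "\<lambda>v w. H v a"] unfolding U_def by simp
  have Vs: "V a \<in> sets cantor_measure" for a
  proof -
    have "V a = {x. (\<lambda>v w. H (if w = v then flip v else w) a) (\<sigma> x) (\<tau> x)}"
      unfolding V_def \<tau>'_def by auto
    moreover have "{x. (\<lambda>v w. H (if w = v then flip v else w) a) (\<sigma> x) (\<tau> x)} \<in> sets cantor_measure"
      by (rule conjunct1[OF meas])
    ultimately show ?thesis by simp
  qed
  have uU: "ultrafilter_name cantor_measure U"
    unfolding U_def by (rule ultra_of) (use homH sB Us in \<open>auto simp: U_def\<close>)
  have uV: "ultrafilter_name cantor_measure V"
    unfolding V_def by (rule ultra_of) (use homH tB Vs in \<open>auto simp: V_def\<close>)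
  define \<Delta> where "\<Delta> = (\<lambda>a. (U a - V a) \<union> (V a - U a))"
  have \<Delta>s: "\<Delta> a \<in> sets cantor_measure" for a using Us Vs by (auto simp: \<Delta>_def)
  define Pr where "Pr = {p \<in> Bj \<times> Bj. fst p \<noteq> snd p}"
  define A where "A = (\<lambda>p. SOME a. H (fst p) a \<noteq> H (snd p) a)"
  have Ap: "H (fst p) (A p) \<noteq> H (snd p) (A p)" if "p \<in> Pr" for p
  proof -
    have "H (fst p) \<noteq> H (snd p)" using that injH unfolding Pr_def by (auto dest: inj_onD)
    then have "\<exists>a. H (fst p) a \<noteq> H (snd p) a" by auto
    then show ?thesis unfolding A_def by (rule someI_ex)
  qed
  have finPr: "finite Pr" unfolding Pr_def by (rule finite_subset[of _ "Bj \<times> Bj"]) (auto simp: finB)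
  have neq: "forces_neq cantor_measure U V"
    unfolding forces_neq_def
  proof (intro ballI impI)
    fix B assume B: "B \<in> sets cantor_measure" and h: "\<forall>a. measure cantor_measure (B \<inter> ((U a - V a) \<union> (V a - U a))) = 0"
    have sub: "B \<subseteq> (\<Union>p\<in>Pr. B \<inter> \<Delta> (A p))"
    proof
      fix x assume x: "x \<in> B"
      have p: "(\<sigma> x, \<tau>' x) \<in> Pr" using sB(1)[of x] tB[of x] tne[of x] unfolding Pr_def by auto
      have "x \<in> \<Delta> (A (\<sigma> x, \<tau>' x))" using Ap[OF p] by (auto simp: \<Delta>_def U_def V_def)
      then show "x \<in> (\<Union>p\<in>Pr. B \<inter> \<Delta> (A p))" using p x by blast
    qed
    have "measure cantor_measure B \<le> measure cantor_measure (\<Union>p\<in>Pr. B \<inter> \<Delta> (A p))"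
      by (rule P.finite_measure_mono[OF sub]) (use finPr B \<Delta>s in auto)
    also have "\<dots> \<le> (\<Sum>p\<in>Pr. measure cantor_measure (B \<inter> \<Delta> (A p)))"
      by (rule P.finite_measure_subadditive_finite) (use finPr B \<Delta>s in auto)
    also have "\<dots> = 0" using h by (simp add: \<Delta>_def)
    finally show "measure cantor_measure B = 0" by (simp add: measure_le_0_iff)
  qed
  have bound: "measure cantor_measure (U a - V a) \<le> 1/4 + \<epsilon>" for a
  proof -
    define S where "S = {v. H v a}"
    define X1 where "X1 = {x. (\<lambda>v w. H v a \<and> \<not> H w a) (\<sigma> x) (\<tau> x)}"
    define X2 where "X2 = {x. (\<lambda>v w. v = w) (\<sigma> x) (\<tau> x)}"
    have m1: "X1 \<in> sets cantor_measure \<and> measure cantor_measure X1 =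
        card {p \<in> Bj \<times> Bj. (\<lambda>v w. H v a \<and> \<not> H w a) (fst p) (snd p)} * (1/2)^(2*j)"
      using meas[of "\<lambda>v w. H v a \<and> \<not> H w a"] unfolding X1_def by simp
    have m2: "X2 \<in> sets cantor_measure \<and> measure cantor_measure X2 =
        card {p \<in> Bj \<times> Bj. (\<lambda>v w. v = w) (fst p) (snd p)} * (1/2)^(2*j)"
      using meas[of "\<lambda>v w. v = w"] unfolding X2_def by simp
    have sub: "U a - V a \<subseteq> X1 \<union> X2" by (auto simp: U_def V_def X1_def X2_def \<tau>'_def)
    have c1: "{p \<in> Bj \<times> Bj. (\<lambda>v w. H v a \<and> \<not> H w a) (fst p) (snd p)} = (Bj \<inter> S) \<times> (Bj - S)"
      by (auto simp: S_def)
    have c2: "{p \<in> Bj \<times> Bj. (\<lambda>v w. v = w) (fst p) (snd p)} = (\<lambda>v. (v, v)) ` Bj" by auto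
    have card2: "card ((\<lambda>v. (v, v)) ` Bj) = card Bj" by (rule card_image) (auto simp: inj_on_def)
    define m where "m = real (card Bj)"
    have mpos: "m > 0" using cardB by (simp add: m_def)
    have mj: "m = 2^j" using cardB by (simp add: m_def)
    have pw: "(1/2::real)^(2*j) = 1 / m^2" unfolding mj by (rule pow_half)
    have "measure cantor_measure X1 = real (card ((Bj \<inter> S) \<times> (Bj - S))) * (1/2)^(2*j)"
      using m1 unfolding c1 by blast
    also have "\<dots> = real (card (Bj \<inter> S)) * (m - real (card (Bj \<inter> S))) * (1 / m^2)"
      unfolding card_prod_diff[OF finB] pw m_def ..
    also have "\<dots> \<le> 1/4" by (rule quarter[OF mpos])
    finally have X1b: "measure cantor_measure X1 \<le> 1/4" .
    have "measure cantor_measure X2 = real (card Bj) * (1/2)^(2*j)"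
      using m2 unfolding c2 card2 by blast
    also have "\<dots> = 1 / m" unfolding pw m_def[symmetric] by (rule diagm[OF mpos])
    also have "\<dots> = (1/2)^j" unfolding mj by (simp add: power_one_over)
    also have "\<dots> \<le> \<epsilon>" by (rule jeps)
    finally have X2b: "measure cantor_measure X2 \<le> \<epsilon>" .
    have "measure cantor_measure (U a - V a) \<le> measure cantor_measure (X1 \<union> X2)"
      by (rule P.finite_measure_mono[OF sub]) (use m1 m2 in auto)
    also have "\<dots> \<le> measure cantor_measure X1 + measure cantor_measure X2"
      by (rule measure_Un_le) (use m1 m2 in auto)
    also have "\<dots> \<le> 1/4 + \<epsilon>" using X1b X2b by simp
    finally show ?thesis .
  qed
  have fin: "measure cantor_measure p \<le> 1/4 + \<epsilon>"
    if p: "p \<in> sets cantor_measure" and "forces_in_diff cantor_measure p U V a" for p a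
  proof -
    have z: "measure cantor_measure (p - (U a - V a)) = 0"
      using that by (simp add: forces_in_diff_def)
    have "p \<subseteq> (p - (U a - V a)) \<union> (U a - V a)" by auto
    then have "measure cantor_measure p \<le> measure cantor_measure ((p - (U a - V a)) \<union> (U a - V a))"
      by (rule P.finite_measure_mono) (use p Us Vs in auto)
    also have "\<dots> \<le> measure cantor_measure (p - (U a - V a)) + measure cantor_measure (U a - V a)"
      by (rule measure_Un_le) (use p Us Vs in auto)
    also have "\<dots> \<le> 1/4 + \<epsilon>" using z bound[of a] by simp
    finally show ?thesis .
  qed
  have last: "\<forall>p\<in>sets cantor_measure. measure cantor_measure p > 0 \<longrightarrow>
      (\<exists>A. forces_in_diff cantor_measure p U V A) \<longrightarrow> measure cantor_measure p \<le> 1/4 + \<epsilon>"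
  proof (intro ballI impI)
    fix p assume p: "p \<in> sets cantor_measure" and "0 < measure cantor_measure p"
      and "\<exists>A. forces_in_diff cantor_measure p U V A"
    then obtain A where "forces_in_diff cantor_measure p U V A" by blast
    then show "measure cantor_measure p \<le> 1/4 + \<epsilon>" by (rule fin[OF p])
  qed
  show ?thesis
    by (rule exI[of _ U], rule exI[of _ V]) (intro conjI uU uV neq last)
qed


end
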